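(* Let $(V,\mathcal H,\iota,W)$ be a generalized functional theory and let $\rho\in V^*$ be a pure-state $v$-representable density. If $\rho$ is a regular value of the smooth map $\iota^*|_{\mathcal P}:\mathcal P\to\mathrm{aff}(\iota^*(\mathcal P))$, then $\rho$ is uniquely $v$-representable.
   Context: A generalized functional theory is a tuple $(V,\mathcal H,\iota,W)$ with $V$ a finite-dimensional real vector space, $\mathcal H$ a finite-dimensional complex Hilbert space, $\iota:V\to i\mathfrak u(\mathcal H)$ a linear map into the Hermitian operators, and $W$ Hermitian. Density operators are regarded as elements of $(i\mathfrak u(\mathcal H))^*$ via the trace pairing; $\iota^*$ is the dual map. $\mathcal P$, the set of pure states (rank-one projectors), is a smooth manifold (identified with projective space). For $v\in V$, $\mathbf G_p(v)$ is the set of pure ground states of $\iota(v)+W$. A density $\rho$ is pure-state $v$-representable if $\rho\in\iota^*(\mathbf G_p(v))$ for some $v\in V$; it is uniquely $v$-representable if moreover every $v'\in V$ with $\rho\in\iota^*(\mathbf G_p(v'))$ satisfies $\iota(v')-\iota(v)\propto\mathbb 1$. A point $q$ is a regular value of a smooth map $f$ if the derivative of $f$ is surjective at every point of $f^{-1}(q)$ (vacuously so if $q\notin\mathrm{im} f$). *)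

theory Defs
  imports "HOL-Analysis.Analysis"
begin

text \<open>Operators on H = C^n are matrices of type complex^'n^'n.\<close>

definition adjoint_mat :: "complex^'n^'n \<Rightarrow> complex^'n^'n" where
  "adjoint_mat A = (\<chi> i j. cnj (A $ j $ i))"

definition hermitian :: "complex^'n^'n \<Rightarrow> bool" where
  "hermitian A \<longleftrightarrow> adjoint_mat A = A"

definition cinner :: "complex^'n \<Rightarrow> complex^'n \<Rightarrow> complex" where
  "cinner x y = (\<Sum>i\<in>UNIV. cnj (x $ i) * y $ i)"

definition proj :: "complex^'n \<Rightarrow> complex^'n^'n" where
  "proj psi = (\<chi> i j. psi $ i * cnj (psi $ j))"

definition pure_states :: "(complex^'n^'n) set" where
  "pure_states = {proj psi | psi. cinner psi psi = 1}"

definition is_ground_vector :: "complex^'n^'n \<Rightarrow> complex^'n \<Rightarrow> bool" where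
  "is_ground_vector H psi \<longleftrightarrow> psi \<noteq> 0 \<and>
     (\<exists>lam::real. H *v psi = complex_of_real lam *s psi \<and>
        (\<forall>mu phi. phi \<noteq> 0 \<and> H *v phi = mu *s phi \<longrightarrow> lam \<le> Re mu))"

definition pure_ground_states :: "complex^'n^'n \<Rightarrow> (complex^'n^'n) set" where
  "pure_ground_states H = {proj psi | psi. cinner psi psi = 1 \<and> is_ground_vector H psi}"

definition Gp :: "('v \<Rightarrow> complex^'n^'n) \<Rightarrow> complex^'n^'n \<Rightarrow> 'v \<Rightarrow> (complex^'n^'n) set" where
  "Gp iota W v = pure_ground_states (iota v + W)"

text \<open>Dual map iota^* : (i u(H))^* -> V^*, operators acting via the trace pairing.\<close>
definition dual_map :: "('v \<Rightarrow> complex^'n^'n) \<Rightarrow> complex^'n^'n \<Rightarrow> ('v \<Rightarrow> real)" where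
  "dual_map iota D = (\<lambda>v. Re (trace (D ** iota v)))"

definition gen_functional_theory :: "('v::euclidean_space \<Rightarrow> complex^'n^'n) \<Rightarrow> complex^'n^'n \<Rightarrow> bool" where
  "gen_functional_theory iota W \<longleftrightarrow> linear iota \<and> (\<forall>v. hermitian (iota v)) \<and> hermitian W"

definition pure_v_representable ::
  "('v \<Rightarrow> complex^'n^'n) \<Rightarrow> complex^'n^'n \<Rightarrow> ('v \<Rightarrow> real) \<Rightarrow> bool" where
  "pure_v_representable iota W rho \<longleftrightarrow> (\<exists>v. rho \<in> dual_map iota ` Gp iota W v)"

definition uniquely_v_representable ::
  "('v \<Rightarrow> complex^'n^'n) \<Rightarrow> complex^'n^'n \<Rightarrow> ('v \<Rightarrow> real) \<Rightarrow> bool" where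
  "uniquely_v_representable iota W rho \<longleftrightarrow>
     (\<exists>v. rho \<in> dual_map iota ` Gp iota W v \<and>
        (\<forall>v'. rho \<in> dual_map iota ` Gp iota W v' \<longrightarrow>
           (\<exists>c::real. iota v' - iota v = c *\<^sub>R mat 1)))"

text \<open>Tangent space of the embedded submanifold P of the Hermitian operators at p:
  velocities of curves in P through p.\<close>
definition tangent_space :: "(complex^'n^'n) set \<Rightarrow> complex^'n^'n \<Rightarrow> (complex^'n^'n) set" where
  "tangent_space S p = {X. \<exists>\<gamma>. (\<forall>t. \<gamma> t \<in> S) \<and> \<gamma> 0 = p \<and> (\<gamma> has_vector_derivative X) (at 0)}"

definition fspan :: "('v \<Rightarrow> real) set \<Rightarrow> ('v \<Rightarrow> real) set" where
  "fspan S = {f. \<exists>t c. finite t \<and> t \<subseteq> S \<and> f = (\<lambda>x. \<Sum>g\<in>t. c g * g x)}"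

text \<open>Tangent (direction) space of the affine hull aff(A) of a set A of functionals:
  the span of differences.\<close>
definition aff_direction :: "('v \<Rightarrow> real) set \<Rightarrow> ('v \<Rightarrow> real) set" where
  "aff_direction A = fspan {(\<lambda>x. f x - g x) | f g. f \<in> A \<and> g \<in> A}"

text \<open>Derivative of iota^*|_P at p (restriction of a linear map): X \<mapsto> iota^*(X) on T_p P.
  rho is a regular value iff this is surjective onto the tangent space of aff(iota^*(P))
  at every point of the fibre over rho.\<close>
definition regular_value ::
  "('v \<Rightarrow> complex^'n^'n) \<Rightarrow> ('v \<Rightarrow> real) \<Rightarrow> bool" where
  "regular_value iota rho \<longleftrightarrow>
     (\<forall>p\<in>pure_states. dual_map iota p = rho \<longrightarrow>
        dual_map iota ` tangent_space pure_states p = aff_direction (dual_map iota ` pure_states))"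

end

theory Submission
  imports Defs
begin

lemma re_cinner: "Re (cinner x y) = inner x y"
  by (simp add: cinner_def inner_vec_def Re_sum inner_complex_def)

lemma im_cinner_self: "Im (cinner x x) = 0"
  by (simp add: cinner_def Im_sum)

lemma cinner_self_eq_1: "cinner x x = 1 \<longleftrightarrow> norm x = 1"
proof -
  have "cinner x x = complex_of_real (norm x ^ 2)"
    using re_cinner[of x x] im_cinner_self[of x]
    by (simp add: complex_eq_iff power2_norm_eq_inner)
  moreover have "(norm x)^2 = 1 \<longleftrightarrow> norm x = 1"
    using norm_ge_zero[of x] by (auto simp: power2_eq_1_iff simp del: norm_ge_zero)
  ultimately show ?thesis by (simp add: complex_eq_iff)
qed

lemma trace_proj: "trace (proj psi ** A) = cinner psi (A *v psi)"
  unfolding trace_def proj_def matrix_matrix_mult_def matrix_vector_mult_def cinner_def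
  by (simp add: sum_distrib_left sum_distrib_right mult_ac) (rule sum.swap)

lemma herm_entry: assumes "hermitian H" shows "cnj (H $ j $ i) = H $ i $ j"
proof -
  have "(adjoint_mat H) $ i $ j = H $ i $ j" using assms by (simp add: hermitian_def)
  then show ?thesis by (simp add: adjoint_mat_def)
qed

lemma herm_cinner: assumes "hermitian H" shows "cinner x (H *v y) = cinner (H *v x) y"
proof -
  have "cinner (H *v x) y = (\<Sum>j\<in>UNIV. \<Sum>i\<in>UNIV. cnj (H $ j $ i) * cnj (x $ i) * y $ j)"
    unfolding cinner_def matrix_vector_mult_def by (simp add: sum_distrib_right)
  also have "\<dots> = (\<Sum>j\<in>UNIV. \<Sum>i\<in>UNIV. H $ i $ j * cnj (x $ i) * y $ j)"
    using herm_entry[OF assms] by simp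
  also have "\<dots> = cinner x (H *v y)"
    unfolding cinner_def matrix_vector_mult_def
    by (simp add: sum_distrib_left mult_ac) (rule sum.swap)
  finally show ?thesis by simp
qed

lemma herm_inner: "hermitian H \<Longrightarrow> inner x (H *v y) = inner (H *v x) y"
proof -
  assume h: "hermitian H"
  have "Re (cinner x (H *v y)) = Re (cinner (H *v x) y)" using herm_cinner[OF h] by simp
  then show ?thesis by (simp only: re_cinner)
qed

lemma mv_scaleR: "(H::complex^'n^'n) *v (c *\<^sub>R x) = c *\<^sub>R (H *v x)"
  by (simp add: vec_eq_iff matrix_vector_mult_def scaleR_sum_right)

lemma mv_diff: "(H::complex^'n^'n) *v (x - y) = H *v x - H *v y"
  by (simp add: vec_eq_iff matrix_vector_mult_def sum_subtractf right_diff_distrib)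

lemma ofreal_s: "complex_of_real c *s (x::complex^'n) = c *\<^sub>R x"
  by (simp add: vec_eq_iff of_real_def)
lemma quad0: fixes a b :: real assumes "\<forall>t. 0 \<le> 2*t*a + t^2*b" "0 \<le> a" shows "a = 0"
proof (rule ccontr)
  assume "a \<noteq> 0" then have a: "a > 0" using assms(2) by simp
  define s where "s = a / (\<bar>b\<bar> + 1)"
  have s: "s > 0" using a by (simp add: s_def)
  have "0 \<le> 2 * (-s) * a + (-s)^2*b" using assms(1) by blast
  then have "2 * s * a \<le> s^2 * b" by simp
  then have "2*a \<le> s * b" using s by (simp add: power2_eq_square)
  also have "s * b \<le> s * \<bar>b\<bar>" using s by (simp add: mult_left_mono)
  also have "s * \<bar>b\<bar> \<le> a" unfolding s_def using a by (simp add: field_simps)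
  finally show False using a by simp
qed

lemma mv_linear: "linear (\<lambda>x. (H::complex^'n^'n) *v x)"
  by (rule linearI) (simp_all add: matrix_vector_right_distrib mv_scaleR)

lemma variational:
  fixes H :: "complex^'n^'n"
  assumes herm: "hermitian H"
  shows "\<exists>phi0 m. phi0 \<noteq> 0 \<and> H *v phi0 = complex_of_real m *s phi0 \<and>
           (\<forall>phi. norm phi = 1 \<longrightarrow> m \<le> inner phi (H *v phi))"
proof -
  define f where "f = (\<lambda>x::complex^'n. inner x (H *v x))"
  have cont: "continuous_on (sphere 0 1) f"
    unfolding f_def
    by (intro continuous_on_inner continuous_on_id linear_continuous_on_compose[OF _ mv_linear])
  have ne: "sphere (0::complex^'n) 1 \<noteq> {}" by (simp add: sphere_eq_empty)
  obtain phi0 where phi0: "phi0 \<in> sphere 0 1" and mn: "\<And>y. y \<in> sphere 0 1 \<Longrightarrow> f phi0 \<le> f y"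
    using continuous_attains_inf[OF compact_sphere ne cont] by blast
  define m where "m = f phi0"
  have n0: "norm phi0 = 1" using phi0 by simp
  have ii0: "inner phi0 phi0 = 1" using n0 by (simp add: dot_square_norm)
  have ge: "m * inner x x \<le> f x" for x
  proof (cases "x = 0")
    case True then show ?thesis by (simp add: f_def)
  next
    case False
    define y where "y = (1 / norm x) *\<^sub>R x"
    have ny: "norm y = 1" using False by (simp add: y_def)
    have xy: "x = norm x *\<^sub>R y" using False by (simp add: y_def)
    have "f x = (norm x)^2 * f y" using ny
      by (subst xy, subst xy) (simp add: f_def mv_scaleR power2_eq_square)
    moreover have "inner x x = (norm x)^2" by (simp add: dot_square_norm)
    moreover have "m \<le> f y" using mn[of y] ny by (simp add: m_def)
    ultimately show ?thesis by (simp add: mult_right_mono mult.commute[of "(norm x)^2"])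
  qed
  define r where "r = H *v phi0 - m *\<^sub>R phi0"
  define g where "g = (\<lambda>x. f x - m * inner x x)"
  have g0: "g phi0 = 0" using ii0 by (simp add: g_def m_def)
  have gnn: "0 \<le> g x" for x using ge[of x] by (simp add: g_def)
  have hs: "inner phi0 (H *v r) = inner (H *v phi0) r" using herm_inner[OF herm] .
  have "\<forall>t. 0 \<le> 2 * t * inner r r + t^2 * g r"
  proof
    fix t :: real
    have "g (phi0 + t *\<^sub>R r) = g phi0 + 2 * t * inner r r + t^2 * g r"
      unfolding g_def f_def
      using hs
      by (simp add: matrix_vector_right_distrib mv_scaleR inner_add_left inner_add_right
          r_def inner_diff_left inner_diff_right power2_eq_square algebra_simps inner_commute)
    then show "0 \<le> 2 * t * inner r r + t^2 * g r" using gnn[of "phi0 + t *\<^sub>R r"] g0 by simp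
  qed
  then have "inner r r = 0" by (rule quad0[OF _ inner_ge_zero])
  then have "r = 0" by simp
  then have "H *v phi0 = complex_of_real m *s phi0" by (simp add: r_def ofreal_s)
  moreover have "phi0 \<noteq> 0" using n0 by auto
  moreover have "\<forall>phi. norm phi = 1 \<longrightarrow> m \<le> inner phi (H *v phi)"
  proof (intro allI impI)
    fix phi :: "complex^'n" assume "norm phi = 1"
    then show "m \<le> inner phi (H *v phi)" using ge[of phi] by (simp add: f_def dot_square_norm)
  qed
  ultimately show ?thesis by blast
qed

definition energy :: "complex^'n^'n \<Rightarrow> complex^'n^'n \<Rightarrow> real" where
  "energy H X = Re (trace (X ** H))"

lemma energy_sum: "energy H X = (\<Sum>i\<in>UNIV. \<Sum>k\<in>UNIV. Re (X $ i $ k * H $ k $ i))"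
  by (simp add: energy_def trace_def matrix_matrix_mult_def Re_sum)

lemma energy_add_H: "energy (A + B) X = energy A X + energy B X"
  by (simp add: energy_sum distrib_left sum.distrib)

lemma energy_diff_H: "energy (A - B) X = energy A X - energy B X"
  by (simp add: energy_sum right_diff_distrib sum_subtractf)

lemma energy_linear: "linear (energy (H::complex^'n^'n))"
proof (rule linearI)
  fix A B :: "complex^'n^'n"
  show "energy H (A + B) = energy H A + energy H B"
    by (simp add: energy_sum distrib_right sum.distrib)
next
  fix c :: real and A :: "complex^'n^'n"
  show "energy H (c *\<^sub>R A) = c *\<^sub>R energy H A"
    by (simp add: energy_sum scaleR_sum_right sum_distrib_left algebra_simps)
qed

lemma energy_proj: "energy H (proj psi) = inner psi (H *v psi)"
  by (simp add: energy_def trace_proj re_cinner)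

lemma dual_map_energy: "dual_map iota D v = energy (iota v) D"
  by (simp add: dual_map_def energy_def)

lemma herm_add: "hermitian A \<Longrightarrow> hermitian B \<Longrightarrow> hermitian (A + B)"
  by (simp add: hermitian_def adjoint_mat_def vec_eq_iff)

lemma herm_diff: "hermitian A \<Longrightarrow> hermitian B \<Longrightarrow> hermitian (A - B)"
  by (simp add: hermitian_def adjoint_mat_def vec_eq_iff)

lemma herm_mat1: "hermitian (c *\<^sub>R (mat 1 :: complex^'n^'n))"
  by (simp add: hermitian_def adjoint_mat_def vec_eq_iff mat_def)

lemma ground_min:
  assumes herm: "hermitian H" and psi: "cinner psi psi = 1" "is_ground_vector H psi"
    and phi: "cinner phi phi = 1"
  shows "energy H (proj psi) \<le> energy H (proj phi)"
proof -
  obtain lam :: real where ev: "H *v psi = complex_of_real lam *s psi"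
    and low: "\<And>mu v. v \<noteq> 0 \<Longrightarrow> H *v v = mu *s v \<Longrightarrow> lam \<le> Re mu"
    using psi(2) unfolding is_ground_vector_def by blast
  obtain phi0 m where "phi0 \<noteq> 0" "H *v phi0 = complex_of_real m *s phi0"
    and mle: "\<forall>phi. norm phi = 1 \<longrightarrow> m \<le> inner phi (H *v phi)"
    using variational[OF herm] by blast
  then have "lam \<le> m" using low by fastforce
  have n1: "norm psi = 1" "norm phi = 1" using psi phi cinner_self_eq_1 by auto
  have "energy H (proj psi) = lam"
    using n1 by (simp add: energy_proj ev ofreal_s dot_square_norm)
  also have "\<dots> \<le> energy H (proj phi)"
    using \<open>lam \<le> m\<close> mle n1 by (simp add: energy_proj) (meson order_trans)
  finally show ?thesis .
qed

lemma ground_min_pure: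
  assumes "hermitian H" "P \<in> pure_ground_states H" "Q \<in> pure_states"
  shows "energy H P \<le> energy H Q"
  using assms ground_min unfolding pure_ground_states_def pure_states_def by blast

lemma pure_ground_pure: "P \<in> pure_ground_states H \<Longrightarrow> P \<in> pure_states"
  unfolding pure_ground_states_def pure_states_def by blast

lemma energy_deriv:
  assumes p: "\<And>Q. Q \<in> pure_states \<Longrightarrow> energy H p \<le> energy H Q"
    and X: "X \<in> tangent_space pure_states p"
  shows "energy H X = 0"
proof -
  obtain g where g: "\<And>t. g t \<in> pure_states" "g 0 = p" "(g has_vector_derivative X) (at 0)"
    using X unfolding tangent_space_def by blast
  have bl: "bounded_linear (energy H)" using energy_linear linear_conv_bounded_linear by blast
  have "((\<lambda>t. energy H (g t)) has_vector_derivative energy H X) (at 0)"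
    using bounded_linear.has_vector_derivative[OF bl g(3)] .
  then have d: "((\<lambda>t. energy H (g t)) has_real_derivative energy H X) (at 0)"
    using has_real_derivative_iff_has_vector_derivative by blast
  show ?thesis
    by (rule DERIV_local_min[OF d, of 1]) (use g p in auto)
qed

lemma zero_form:
  fixes B :: "complex^'n^'n"
  assumes herm: "hermitian B" and z: "\<And>x. inner x (B *v x) = 0"
  shows "B = 0"
proof -
  have "inner x (B *v y) = 0" for x y
  proof -
    have "inner (x + y) (B *v (x + y)) = inner x (B *v x) + inner y (B *v y) + 2 * inner x (B *v y)"
      using herm_inner[OF herm, of y x]
      by (simp add: matrix_vector_right_distrib inner_add_left inner_add_right inner_commute)
    then show ?thesis using z by simp
  qed
  then have "B *v y = 0" for y using inner_eq_zero_iff[of "B *v y"] by blast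
  then show ?thesis by (simp add: matrix_eq)
qed

lemma smat_mv: "(c *\<^sub>R (M :: complex^'n^'n)) *v x = c *\<^sub>R (M *v x)"
  by (simp add: vec_eq_iff matrix_vector_mult_def scaleR_sum_right)

lemma mat1_mv: "(c *\<^sub>R (mat 1 :: complex^'n^'n)) *v x = c *\<^sub>R x"
  by (simp add: smat_mv)

lemma mv_sub_r: "((A::complex^'n^'n) - B) *v x = A *v x - B *v x"
  by (simp add: vec_eq_iff matrix_vector_mult_def sum_subtractf left_diff_distrib)

lemma const_form_zero:
  fixes A :: "complex^'n^'n"
  assumes herm: "hermitian A" and const: "\<And>Q. Q \<in> pure_states \<Longrightarrow> energy A Q = c"
  shows "A = c *\<^sub>R mat 1"
proof -
  define B where "B = A - c *\<^sub>R mat 1"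
  have hB: "hermitian B" unfolding B_def by (rule herm_diff[OF herm herm_mat1])
  have unit: "inner y (B *v y) = 0" if ny: "norm y = 1" for y
  proof -
    have py: "proj y \<in> pure_states" using ny cinner_self_eq_1 unfolding pure_states_def by blast
    have "inner y (A *v y) = c" using const[OF py] by (simp add: energy_proj)
    moreover have "inner y y = 1" using ny by (simp add: dot_square_norm)
    ultimately show ?thesis
      by (simp add: B_def mv_sub_r mat1_mv inner_diff_right)
  qed
  have "inner x (B *v x) = 0" for x
  proof (cases "x = 0")
    case True then show ?thesis by simp
  next
    case False
    define y where "y = (1 / norm x) *\<^sub>R x"
    have ny: "norm y = 1" using False by (simp add: y_def)
    have xy: "x = norm x *\<^sub>R y" using False by (simp add: y_def)
    have "inner x (B *v x) = (norm x)^2 * inner y (B *v y)"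
      by (subst xy, subst xy) (simp add: mv_scaleR power2_eq_square)
    then show ?thesis using unit[OF ny] by simp
  qed
  then have "B = 0" using zero_form[OF hB] by blast
  then show ?thesis by (simp add: B_def)
qed

theorem proposition2p19:
  fixes iota :: "'v::euclidean_space \<Rightarrow> complex^'n^'n"
    and W :: "complex^'n^'n"
    and rho :: "'v \<Rightarrow> real"
  assumes "gen_functional_theory iota W"
    and "pure_v_representable iota W rho"
    and "regular_value iota rho"
  shows "uniquely_v_representable iota W rho"
proof -
  have lin: "linear iota" and hi: "\<And>v. hermitian (iota v)" and hW: "hermitian W"
    using assms(1) unfolding gen_functional_theory_def by auto
  have hH: "\<And>v. hermitian (iota v + W)" using hi hW herm_add by blast
  have eH: "\<And>x Q. energy (iota x + W) Q = dual_map iota Q x + energy W Q"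
    by (simp add: energy_add_H dual_map_energy)
  obtain v P where P: "P \<in> Gp iota W v" and rP: "rho = dual_map iota P"
    using assms(2) unfolding pure_v_representable_def by blast
  have Ppure: "P \<in> pure_states" using P pure_ground_pure unfolding Gp_def by blast
  have minP: "\<And>Q. Q \<in> pure_states \<Longrightarrow> energy (iota v + W) P \<le> energy (iota v + W) Q"
    using P ground_min_pure[OF hH] unfolding Gp_def by blast
  have reg: "dual_map iota ` tangent_space pure_states P = aff_direction (dual_map iota ` pure_states)"
  proof -
    have "\<forall>p\<in>pure_states. dual_map iota p = rho \<longrightarrow>
        dual_map iota ` tangent_space pure_states p = aff_direction (dual_map iota ` pure_states)"
      using assms(3) unfolding regular_value_def .
    from this[rule_format, OF Ppure rP[symmetric]] show ?thesis .
  qed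
  have "\<forall>v'. rho \<in> dual_map iota ` Gp iota W v' \<longrightarrow> (\<exists>c::real. iota v' - iota v = c *\<^sub>R mat 1)"
  proof (intro allI impI)
    fix v' assume "rho \<in> dual_map iota ` Gp iota W v'"
    then obtain P' where P': "P' \<in> Gp iota W v'" and rP': "rho = dual_map iota P'" by blast
    have P'pure: "P' \<in> pure_states" using P' pure_ground_pure unfolding Gp_def by blast
    have minP': "\<And>Q. Q \<in> pure_states \<Longrightarrow> energy (iota v' + W) P' \<le> energy (iota v' + W) Q"
      using P' ground_min_pure[OF hH] unfolding Gp_def by blast
    have deq: "\<And>x. dual_map iota P x = dual_map iota P' x" using rP rP' by simp
    have "energy W P \<le> energy W P'" using minP[OF P'pure] eH deq by simp
    moreover have "energy W P' \<le> energy W P" using minP'[OF Ppure] eH deq by simp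
    ultimately have "energy (iota v' + W) P = energy (iota v' + W) P'" using eH deq by simp
    then have minP2: "\<And>Q. Q \<in> pure_states \<Longrightarrow> energy (iota v' + W) P \<le> energy (iota v' + W) Q"
      using minP' by simp
    define A where "A = iota v' - iota v"
    have hA: "hermitian A" unfolding A_def by (rule herm_diff[OF hi hi])
    have iu: "iota (v' - v) = A" unfolding A_def using lin by (simp add: linear_diff)
    have tan0: "energy A X = 0" if X: "X \<in> tangent_space pure_states P" for X
    proof -
      have "energy (iota v + W) X = 0" using energy_deriv[OF minP X] .
      moreover have "energy (iota v' + W) X = 0" using energy_deriv[OF minP2 X] .
      ultimately show ?thesis unfolding A_def using eH by (simp add: energy_diff_H dual_map_energy)
    qed
    have const: "energy A Q = energy A P" if Q: "Q \<in> pure_states" for Q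
    proof -
      let ?f = "\<lambda>x. dual_map iota Q x - dual_map iota P x"
      define S where "S = {(\<lambda>x. f x - g x) | f g. f \<in> dual_map iota ` pure_states \<and> g \<in> dual_map iota ` pure_states}"
      have imQ: "dual_map iota Q \<in> dual_map iota ` pure_states" using Q by (rule imageI)
      have imP: "dual_map iota P \<in> dual_map iota ` pure_states" using Ppure by (rule imageI)
      have mem: "?f \<in> S" unfolding S_def
        by (intro CollectI exI[of _ "dual_map iota Q"] exI[of _ "dual_map iota P"] conjI refl imQ imP)
      have fin: "finite {?f} \<and> {?f} \<subseteq> S \<and> ?f = (\<lambda>x. \<Sum>g\<in>{?f}. (\<lambda>_. 1::real) g * g x)"
      proof (intro conjI)
        show "finite {?f}" by (rule finite.insertI[OF finite.emptyI])
        show "{?f} \<subseteq> S" using mem by (simp only: insert_subset empty_subsetI simp_thms)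
        show "?f = (\<lambda>x. \<Sum>g\<in>{?f}. (\<lambda>_. 1::real) g * g x)" by simp
      qed
      have aff: "?f \<in> aff_direction (dual_map iota ` pure_states)"
        unfolding aff_direction_def fspan_def S_def[symmetric]
        apply (rule CollectI)
        apply (rule exI[of _ "{?f}"])
        apply (rule exI[of _ "\<lambda>_. 1::real"])
        by (rule fin)
      have "?f \<in> dual_map iota ` tangent_space pure_states P" using aff reg by (simp only:)
      then obtain X where X: "X \<in> tangent_space pure_states P" and fX: "?f = dual_map iota X"
        by (rule imageE) 
      have "dual_map iota X (v' - v) = 0" using tan0[OF X] iu by (simp add: dual_map_energy)
      moreover have "?f (v' - v) = dual_map iota X (v' - v)" using fX by (rule fun_cong)
      ultimately have "?f (v' - v) = 0" by (simp only:)
      then show ?thesis using iu by (simp add: dual_map_energy)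
    qed
    have "A = energy A P *\<^sub>R mat 1" using const_form_zero[OF hA const] .
    then have "iota v' - iota v = energy A P *\<^sub>R mat 1" by (simp only: A_def)
    then show "\<exists>c::real. iota v' - iota v = c *\<^sub>R mat 1" by (rule exI)
  qed
  moreover have "rho \<in> dual_map iota ` Gp iota W v" unfolding rP by (rule imageI[OF P])
  ultimately show ?thesis unfolding uniquely_v_representable_def by (intro exI[of _ v] conjI)
qed

end
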